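(* Let $q,q',n$ be integers with $q'\ge 2q>3$ and $n>1$. Let $S$ be an $\mathcal{OS}_q(n)$ of period $m$ with ring sequence $[s_0,\ldots,s_{m-1}]$, and for $x\in\mathbb{Z}_q$ let $x'$ denote the class in $\mathbb{Z}_{q'}$ of the integer in $\{0,\ldots,q-1\}$ representing $x$. Let $T$ be the sequence over $\mathbb{Z}_{q'}$ with ring sequence $[t_0,\ldots,t_{m-1}]$, where $t_i=(-1)^{i+m-1}s_i'$ if $s_i'\neq 0$ and $t_i=(-1)^{i+m-1}q$ (as an element of $\mathbb{Z}_{q'}$) if $s_i'=0$. Then $T$ is an $\mathcal{SOS}_{q'}(n)$.
   Context: For a periodic sequence $S=(s_i)$ over $\mathbb{Z}_q$ write $\mathbf{s}_n(i)=(s_i,\ldots,s_{i+n-1})$; $\mathbf{u}^R$ denotes the reverse of a tuple and $-\mathbf{u}$ its termwise negative. An $n$-window sequence of period $m$ satisfies $\mathbf{s}_n(i)=\mathbf{s}_n(j)\Rightarrow i\equiv j\pmod m$. An $\mathcal{OS}_q(n)$ is an $n$-window sequence with $\mathbf{s}_n(i)\neq\mathbf{s}_n(j)^R$ for all $i,j$; an $\mathcal{SOS}_q(n)$ is an $\mathcal{OS}_q(n)$ with also $\mathbf{s}_n(i)\neq-\mathbf{s}_n(j)^R$ for all $i,j$. The ring sequence of a sequence of period $m$ is one period, i.e. $s_{i+tm}=s_i$. *)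

theory Defs
  imports Main
begin

text \<open>A sequence over Z_q is a function nat => int with values in {0..<q}
  (canonical representatives of residue classes).\<close>

definition over_Zq :: "int \<Rightarrow> (nat \<Rightarrow> int) \<Rightarrow> bool" where
  "over_Zq q s \<longleftrightarrow> (\<forall>i. 0 \<le> s i \<and> s i < q)"

definition window :: "(nat \<Rightarrow> int) \<Rightarrow> nat \<Rightarrow> nat \<Rightarrow> int list" where
  "window s n i = map s [i..<i+n]"

definition neg_tuple :: "int \<Rightarrow> int list \<Rightarrow> int list" where
  "neg_tuple q u = map (\<lambda>x. (- x) mod q) u"

definition periodic_seq :: "(nat \<Rightarrow> int) \<Rightarrow> nat \<Rightarrow> bool" where
  "periodic_seq s m \<longleftrightarrow> m > 0 \<and> (\<forall>i. s (i + m) = s i)"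

definition window_seq :: "int \<Rightarrow> nat \<Rightarrow> nat \<Rightarrow> (nat \<Rightarrow> int) \<Rightarrow> bool" where
  "window_seq q n m s \<longleftrightarrow> over_Zq q s \<and> periodic_seq s m \<and>
     (\<forall>i j. window s n i = window s n j \<longrightarrow> i mod m = j mod m)"

definition OS :: "int \<Rightarrow> nat \<Rightarrow> nat \<Rightarrow> (nat \<Rightarrow> int) \<Rightarrow> bool" where
  "OS q n m s \<longleftrightarrow> window_seq q n m s \<and> (\<forall>i j. window s n i \<noteq> rev (window s n j))"

definition SOS :: "int \<Rightarrow> nat \<Rightarrow> nat \<Rightarrow> (nat \<Rightarrow> int) \<Rightarrow> bool" where
  "SOS q n m s \<longleftrightarrow> OS q n m s \<and> (\<forall>i j. window s n i \<noteq> neg_tuple q (rev (window s n j)))"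

end

theory Submission
  imports Defs
begin

definition dec :: "int \<Rightarrow> int \<Rightarrow> int \<Rightarrow> int" where
  "dec q q' x = (if x \<le> q then x else q' - x) mod q"

lemma dec_pos:
  fixes q q' v :: int
  assumes "q' \<ge> 2 * q" "1 \<le> v" "v \<le> q"
  shows "dec q q' (v mod q') = v mod q" "dec q q' ((- v) mod q') = v mod q"
proof -
  have vm: "v mod q' = v" using assms by simp
  have nm: "(- v) mod q' = q' - v"
    using assms by (smt (verit) mod_pos_pos_trivial mod_add_self2)
  show "dec q q' (v mod q') = v mod q" using vm assms by (simp add: dec_def)
  show "dec q q' ((- v) mod q') = v mod q"
  proof (cases "q' - v \<le> q")
    case True
    then have "v = q" "q' = 2*q" using assms by auto
    then show ?thesis using nm by (simp add: dec_def)
  next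
    case False
    then show ?thesis using nm by (simp add: dec_def)
  qed
qed

lemma dec_sign:
  fixes q q' v :: int
  assumes "q' \<ge> 2 * q" "1 \<le> v" "v \<le> q" "\<sigma> = 1 \<or> \<sigma> = -1"
  shows "dec q q' ((\<sigma> * v) mod q') = v mod q"
    "dec q q' ((- ((\<sigma> * v) mod q')) mod q') = v mod q"
proof -
  have q'pos: "q' > 0" using assms by simp
  have e: "(- ((\<sigma> * v) mod q')) mod q' = (- (\<sigma> * v)) mod q'"
    by (simp add: mod_minus_eq)
  show "dec q q' ((\<sigma> * v) mod q') = v mod q"
    using assms(4) dec_pos[OF assms(1-3)] by auto
  show "dec q q' ((- ((\<sigma> * v) mod q')) mod q') = v mod q"
    unfolding e using assms(4) dec_pos[OF assms(1-3)] by auto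
qed

lemma periodic_mod: "periodic_seq t m \<Longrightarrow> t k = t (k mod m)"
proof (induction k rule: less_induct)
  case (less k)
  show ?case
  proof (cases "k < m")
    case True then show ?thesis by simp
  next
    case False
    then obtain j where j: "k = j + m" by (metis add.commute le_Suc_ex not_less)
    have "m > 0" using less.prems by (simp add: periodic_seq_def)
    then have "t k = t j" using less.prems j by (simp add: periodic_seq_def)
    also have "\<dots> = t (j mod m)" using less j \<open>m > 0\<close> by simp
    finally show ?thesis using j by simp
  qed
qed

theorem lemma3p12:
  fixes q q' :: int and n m :: nat and s t :: "nat \<Rightarrow> int"
  assumes "q' \<ge> 2 * q" and "2 * q > 3" and "n > 1"
    and "OS q n m s"
    and "periodic_seq t m"
    and "\<forall>i<m. t i = (let sp = s i mod q' in
            ((-1) ^ (i + m - 1) * (if sp \<noteq> 0 then sp else q)) mod q')"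
  shows "SOS q' n m t"
proof -
  have ws: "window_seq q n m s" and osr: "\<forall>i j. window s n i \<noteq> rev (window s n j)"
    using assms(4) unfolding OS_def by blast+
  have ov: "over_Zq q s" and ps: "periodic_seq s m"
    and inj: "\<forall>i j. window s n i = window s n j \<longrightarrow> i mod m = j mod m"
    using ws unfolding window_seq_def by blast+
  have mpos: "m > 0" using ps by (simp add: periodic_seq_def)
  have q'pos: "q' > 0" using assms by simp
  have key: "dec q q' (t k) = s k \<and> dec q q' ((- t k) mod q') = s k" for k
  proof -
    define i where "i = k mod m"
    have im: "i < m" using mpos i_def by simp
    have tk: "t k = t i" using periodic_mod[OF assms(5)] i_def by simp
    have sk: "s k = s i" using periodic_mod[OF ps] i_def by simp
    have sr: "0 \<le> s i" "s i < q" using ov by (auto simp: over_Zq_def)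
    have smod: "s i mod q' = s i" using sr assms(1) by simp
    define v where "v = (if s i \<noteq> 0 then s i else q)"
    define \<sigma> :: int where "\<sigma> = (-1) ^ (i + m - 1)"
    have sg: "\<sigma> = 1 \<or> \<sigma> = -1" unfolding \<sigma>_def by (simp add: minus_one_power_iff)
    have ti: "t i = (\<sigma> * v) mod q'"
      using assms(6) im smod by (simp add: v_def \<sigma>_def Let_def)
    have v1: "1 \<le> v" "v \<le> q" using sr by (auto simp: v_def)
    have vq: "v mod q = s i" using sr by (simp add: v_def)
    show ?thesis using dec_sign[OF assms(1) v1 sg] tk sk ti vq by simp
  qed
  have mw: "map (dec q q') (window t n i) = window s n i" for i
    using key by (simp add: window_def)
  have mn: "map (dec q q') (neg_tuple q' (rev (window t n j))) = rev (window s n j)" for j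
    using key by (simp add: window_def neg_tuple_def rev_map)
  have ovt: "over_Zq q' t"
    unfolding over_Zq_def
  proof
    fix k
    have "t k = t (k mod m)" using periodic_mod[OF assms(5)] .
    also have "\<dots> = (let sp = s (k mod m) mod q' in
            ((-1) ^ (k mod m + m - 1) * (if sp \<noteq> 0 then sp else q)) mod q')"
      using assms(6) mpos by simp
    finally show "0 \<le> t k \<and> t k < q'" using q'pos by (simp add: Let_def)
  qed
  have wt: "window_seq q' n m t"
    unfolding window_seq_def
  proof (intro conjI allI impI)
    show "over_Zq q' t" by (rule ovt)
    show "periodic_seq t m" by (rule assms(5))
    fix i j assume "window t n i = window t n j"
    then have "map (dec q q') (window t n i) = map (dec q q') (window t n j)" by simp
    then have "window s n i = window s n j" by (simp only: mw)
    then show "i mod m = j mod m" using inj by blast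
  qed
  have ost: "OS q' n m t"
    unfolding OS_def
  proof (intro conjI allI notI)
    show "window_seq q' n m t" by (rule wt)
    fix i j assume "window t n i = rev (window t n j)"
    then have "map (dec q q') (window t n i) = rev (map (dec q q') (window t n j))"
      by (simp add: rev_map)
    then have "window s n i = rev (window s n j)" by (simp only: mw)
    then show False using osr by blast
  qed
  show ?thesis
    unfolding SOS_def
  proof (intro conjI allI notI)
    show "OS q' n m t" by (rule ost)
    fix i j assume "window t n i = neg_tuple q' (rev (window t n j))"
    then have "map (dec q q') (window t n i) = map (dec q q') (neg_tuple q' (rev (window t n j)))"
      by simp
    then have "window s n i = rev (window s n j)" by (simp only: mw mn)
    then show False using osr by blast
  qed
qed

end
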